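(* For all unitary distributions of closed abstractions $\big(\sum_{i=1}^n\alpha_i\cdot\lambda x.\vec t_i\big)\in\mathcal S$ and all types $A,B$: $\sum_{i=1}^n\alpha_i\cdot\lambda x.\vec t_i\in[\![A\Rightarrow B]\!]$ if and only if $\lambda x.\big(\sum_{i=1}^n\alpha_i\cdot\vec t_i\big)\in[\![A\rightarrow B]\!]$.
   Context: Calculus. Pure values $v::=x\mid\lambda x.\vec s\mid *\mid(v_1,v_2)\mid\mathtt{inl}(v)\mid\mathtt{inr}(v)$; pure terms add application $s\,t$, sequence $t;\vec s$, $\mathtt{let}\,(x_1,x_2)=t\,\mathtt{in}\,\vec s$ and $\mathtt{match}\,t\{\mathtt{inl}\,x_1\mapsto\vec s_1\mid\mathtt{inr}\,x_2\mapsto\vec s_2\}$; term distributions are formal expressions $\vec 0\mid t\mid\vec s+\vec t\mid\alpha\cdot\vec t$ ($\alpha\in\mathbb C$), taken at top level modulo the weak-vector-space congruence (which never acts inside pure terms, e.g. inside an abstraction body, and does not identify $0\cdot t$ with $\vec 0$); canonical form $\sum_i\alpha_it_i$ with distinct $t_i$. Bilinear substitution $\vec t\langle x:=\vec w\rangle=\sum_j\beta_j\vec t[x:=w_j]$ for $\vec w=\sum_j\beta_jw_j$. Evaluation $\succ^*$ is the reflexive-transitive closure of one-step evaluation $\alpha\cdot s+\vec r\succ\alpha\cdot\vec s'+\vec r$ whenever $s\triangleright\vec s'$, where $\triangleright$ is call-by-value atomic evaluation ($(\lambda x.\vec t)v\triangleright\vec t[x:=v]$, $*;\vec s\triangleright\vec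 s$, let/match on value constructors, and closure rules under the evaluated positions). Semantics. $\mathcal S$ is the set of closed value distributions of $\ell_2$-norm $1$, where for canonical forms $\|\sum_i\alpha_iv_i\|^2=\sum_i|\alpha_i|^2$. Types are given by a set $[\![A]\!]\subseteq\mathcal S$; $\vec t\Vdash A$ iff $\vec t\succ^*\vec v$ for some $\vec v\in[\![A]\!]$. $[\![A\rightarrow B]\!]=\{\lambda x.\vec t\ \text{closed}:\forall\vec v\in[\![A]\!],\ \vec t\langle x:=\vec v\rangle\Vdash B\}$ and $[\![A\Rightarrow B]\!]=\{(\sum_{i=1}^n\alpha_i\cdot\lambda x.\vec t_i)\in\mathcal S:\forall\vec v\in[\![A]\!],\ (\sum_i\alpha_i\cdot\vec t_i\langle x:=\vec v\rangle)\Vdash B\}$. *)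

theory Defs
  imports Complex_Main
begin

text \<open>Inside pure terms the distributions are kept as formal expressions.
  Binding: VLam binds index 0; TLet binds x1 as index 1 and x2 as index 0;
  each TMatch branch binds index 0.\<close>

datatype val =
    VVar nat
  | VLam dist
  | VUnit
  | VPair val val
  | VInl val
  | VInr val
and trm =
    TVal val
  | TApp trm trm
  | TSeq trm dist
  | TLet trm dist
  | TMatch trm dist dist
and dist =
    DZero
  | DTrm trm
  | DPlus dist dist
  | DScal complex dist

primrec closed_v :: "nat \<Rightarrow> val \<Rightarrow> bool"
  and closed_t :: "nat \<Rightarrow> trm \<Rightarrow> bool"
  and closed_d :: "nat \<Rightarrow> dist \<Rightarrow> bool" where
  "closed_v k (VVar n) = (n < k)"
| "closed_v k (VLam d) = closed_d (Suc k) d"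
| "closed_v k VUnit = True"
| "closed_v k (VPair v w) = (closed_v k v \<and> closed_v k w)"
| "closed_v k (VInl v) = closed_v k v"
| "closed_v k (VInr v) = closed_v k v"
| "closed_t k (TVal v) = closed_v k v"
| "closed_t k (TApp s t) = (closed_t k s \<and> closed_t k t)"
| "closed_t k (TSeq t d) = (closed_t k t \<and> closed_d k d)"
| "closed_t k (TLet t d) = (closed_t k t \<and> closed_d (k + 2) d)"
| "closed_t k (TMatch t d1 d2) = (closed_t k t \<and> closed_d (Suc k) d1 \<and> closed_d (Suc k) d2)"
| "closed_d k DZero = True"
| "closed_d k (DTrm t) = closed_t k t"
| "closed_d k (DPlus d e) = (closed_d k d \<and> closed_d k e)"
| "closed_d k (DScal a d) = closed_d k d"

text \<open>Substitution of a (closed) value for the index k; only closed values are ever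
  substituted, so no lifting is needed.\<close>

primrec subst_v :: "nat \<Rightarrow> val \<Rightarrow> val \<Rightarrow> val"
  and subst_t :: "nat \<Rightarrow> val \<Rightarrow> trm \<Rightarrow> trm"
  and subst_d :: "nat \<Rightarrow> val \<Rightarrow> dist \<Rightarrow> dist" where
  "subst_v k w (VVar n) = (if n = k then w else if k < n then VVar (n - 1) else VVar n)"
| "subst_v k w (VLam d) = VLam (subst_d (Suc k) w d)"
| "subst_v k w VUnit = VUnit"
| "subst_v k w (VPair v1 v2) = VPair (subst_v k w v1) (subst_v k w v2)"
| "subst_v k w (VInl v) = VInl (subst_v k w v)"
| "subst_v k w (VInr v) = VInr (subst_v k w v)"
| "subst_t k w (TVal v) = TVal (subst_v k w v)"
| "subst_t k w (TApp s t) = TApp (subst_t k w s) (subst_t k w t)"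
| "subst_t k w (TSeq t d) = TSeq (subst_t k w t) (subst_d k w d)"
| "subst_t k w (TLet t d) = TLet (subst_t k w t) (subst_d (k + 2) w d)"
| "subst_t k w (TMatch t d1 d2) = TMatch (subst_t k w t) (subst_d (Suc k) w d1) (subst_d (Suc k) w d2)"
| "subst_d k w DZero = DZero"
| "subst_d k w (DTrm t) = DTrm (subst_t k w t)"
| "subst_d k w (DPlus d e) = DPlus (subst_d k w d) (subst_d k w e)"
| "subst_d k w (DScal a d) = DScal a (subst_d k w d)"

text \<open>A top-level term distribution in canonical form \<open>\<Sum>i \<alpha>i t_i\<close> (distinct t_i,
  coefficients possibly 0, since 0\<cdot>t is not identified with the zero distribution)
  is a finite partial map from pure terms to coefficients.\<close>

type_synonym cdist = "trm \<Rightarrow> complex option"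

definition madd :: "cdist \<Rightarrow> cdist \<Rightarrow> cdist" where
  "madd f g = (\<lambda>u. case f u of None \<Rightarrow> g u
      | Some a \<Rightarrow> (case g u of None \<Rightarrow> Some a | Some b \<Rightarrow> Some (a + b)))"

definition mscale :: "complex \<Rightarrow> cdist \<Rightarrow> cdist" where
  "mscale a f = (\<lambda>u. map_option (\<lambda>b. a * b) (f u))"

definition msumset :: "'i set \<Rightarrow> ('i \<Rightarrow> complex) \<Rightarrow> ('i \<Rightarrow> cdist) \<Rightarrow> cdist" where
  "msumset I c F = (\<lambda>u. if (\<exists>i\<in>I. u \<in> dom (F i))
      then Some (\<Sum>i\<in>{i\<in>I. u \<in> dom (F i)}. c i * the (F i u)) else None)"

definition mapd :: "(trm \<Rightarrow> trm) \<Rightarrow> cdist \<Rightarrow> cdist" where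
  "mapd g T = msumset (dom T) (\<lambda>t. the (T t)) (\<lambda>t. [g t \<mapsto> 1])"

primrec cls :: "dist \<Rightarrow> cdist" where
  "cls DZero = Map.empty"
| "cls (DTrm t) = [t \<mapsto> 1]"
| "cls (DPlus d e) = madd (cls d) (cls e)"
| "cls (DScal a d) = mscale a (cls d)"

definition bsubst :: "cdist \<Rightarrow> cdist \<Rightarrow> cdist" where
  "bsubst T W = msumset (dom W) (\<lambda>u. the (W u))
     (\<lambda>u. case u of TVal w \<Rightarrow> mapd (subst_t 0 w) T | _ \<Rightarrow> Map.empty)"

inductive atomic :: "trm \<Rightarrow> cdist \<Rightarrow> bool" where
  beta: "atomic (TApp (TVal (VLam d)) (TVal v)) (cls (subst_d 0 v d))"
| seq: "atomic (TSeq (TVal VUnit) d) (cls d)"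
| lett: "atomic (TLet (TVal (VPair v1 v2)) d) (cls (subst_d 0 v1 (subst_d 0 v2 d)))"
| match_inl: "atomic (TMatch (TVal (VInl v)) d1 d2) (cls (subst_d 0 v d1))"
| match_inr: "atomic (TMatch (TVal (VInr v)) d1 d2) (cls (subst_d 0 v d2))"
| app_arg: "atomic t T \<Longrightarrow> atomic (TApp s t) (mapd (TApp s) T)"
| app_fun: "atomic s S \<Longrightarrow> atomic (TApp s (TVal v)) (mapd (\<lambda>u. TApp u (TVal v)) S)"
| seq_ctx: "atomic t T \<Longrightarrow> atomic (TSeq t d) (mapd (\<lambda>u. TSeq u d) T)"
| let_ctx: "atomic t T \<Longrightarrow> atomic (TLet t d) (mapd (\<lambda>u. TLet u d) T)"
| match_ctx: "atomic t T \<Longrightarrow> atomic (TMatch t d1 d2) (mapd (\<lambda>u. TMatch u d1 d2) T)"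

definition step :: "cdist \<Rightarrow> cdist \<Rightarrow> bool" where
  "step D D' = (\<exists>a s S' r. finite (dom r) \<and> atomic s S' \<and>
      D = madd [s \<mapsto> a] r \<and> D' = madd (mscale a S') r)"

definition unit_sphere :: "cdist set" where
  "unit_sphere = {D. finite (dom D) \<and> dom D \<subseteq> {TVal v |v. closed_v 0 v} \<and>
      (\<Sum>u\<in>dom D. (cmod (the (D u)))\<^sup>2) = 1}"

definition realizes :: "cdist \<Rightarrow> cdist set \<Rightarrow> bool" where
  "realizes D A = (\<exists>V. step\<^sup>*\<^sup>* D V \<and> V \<in> A)"

definition arrow :: "cdist set \<Rightarrow> cdist set \<Rightarrow> cdist set" where
  "arrow A B = {D. \<exists>d. D = [TVal (VLam d) \<mapsto> 1] \<and> closed_v 0 (VLam d) \<and>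
      (\<forall>V\<in>A. realizes (bsubst (cls d) V) B)}"

definition darrow :: "cdist set \<Rightarrow> cdist set \<Rightarrow> cdist set" where
  "darrow A B = {D \<in> unit_sphere. dom D \<subseteq> {TVal (VLam d) |d. True} \<and>
      (\<forall>V\<in>A. realizes (msumset (dom D) (\<lambda>u. the (D u))
          (\<lambda>u. case u of TVal (VLam d) \<Rightarrow> bsubst (cls d) V | _ \<Rightarrow> Map.empty)) B)}"

fun fsum :: "(complex \<times> dist) list \<Rightarrow> dist" where
  "fsum [] = DZero"
| "fsum [(a, d)] = DScal a d"
| "fsum ((a, d) # xs) = DPlus (DScal a d) (fsum xs)"

end

theory Submission
  imports Defs
begin

definition v0 :: "cdist \<Rightarrow> trm \<Rightarrow> complex" where
  "v0 f u = (case f u of None \<Rightarrow> 0 | Some a \<Rightarrow> a)"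

lemma cdist_eqI:
  assumes "dom f = dom g" and "\<And>u. v0 f u = v0 g u"
  shows "f = g"
proof
  fix u
  show "f u = g u"
  proof (cases "f u")
    case None
    then have "g u = None" using assms(1) by auto
    then show ?thesis using None by simp
  next
    case (Some a)
    then obtain b where "g u = Some b" using assms(1) by (metis domD domI)
    then show ?thesis using Some assms(2)[of u] by (simp add: v0_def)
  qed
qed

lemma v0_notin: "u \<notin> dom f \<Longrightarrow> v0 f u = 0"
  by (simp add: v0_def domIff)

lemma v0_in: "u \<in> dom f \<Longrightarrow> the (f u) = v0 f u"
  by (auto simp: v0_def)

lemma v0_single[simp]: "v0 [t \<mapsto> a] t = a"
  by (simp add: v0_def)

lemma madd_empty[simp]: "madd Map.empty Map.empty = Map.empty"
  by (simp add: madd_def)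

lemma mscale_empty[simp]: "mscale a Map.empty = Map.empty"
  by (simp add: mscale_def)

lemma dom_madd[simp]: "dom (madd f g) = dom f \<union> dom g"
  by (auto simp: madd_def split: option.splits)

lemma v0_madd[simp]: "v0 (madd f g) u = v0 f u + v0 g u"
  by (auto simp: madd_def v0_def split: option.splits)

lemma dom_mscale[simp]: "dom (mscale a f) = dom f"
  by (auto simp: mscale_def)

lemma v0_mscale[simp]: "v0 (mscale a f) u = a * v0 f u"
  by (auto simp: mscale_def v0_def split: option.splits)

lemma dom_msumset[simp]: "dom (msumset I c F) = (\<Union>i\<in>I. dom (F i))"
  by (auto simp: msumset_def domIff split: if_splits; blast)

lemma v0_msumset[simp]:
  assumes "finite I"
  shows "v0 (msumset I c F) u = (\<Sum>i\<in>I. c i * v0 (F i) u)"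
proof (cases "\<exists>i\<in>I. u \<in> dom (F i)")
  case True
  have "(\<Sum>i\<in>{i\<in>I. u \<in> dom (F i)}. c i * the (F i u)) = (\<Sum>i\<in>{i\<in>I. u \<in> dom (F i)}. c i * v0 (F i) u)"
    by (rule sum.cong) (auto simp: v0_in)
  also have "\<dots> = (\<Sum>i\<in>I. c i * v0 (F i) u)"
    by (rule sum.mono_neutral_left) (auto simp: assms v0_notin)
  finally show ?thesis using True by (simp add: msumset_def v0_def)
next
  case False
  then have "\<forall>i\<in>I. v0 (F i) u = 0" using v0_notin by blast
  then show ?thesis using False by (simp add: msumset_def v0_def)
qed

lemma msumset_madd:
  assumes "finite I"
  shows "msumset I c (\<lambda>i. madd (F i) (G i)) = madd (msumset I c F) (msumset I c G)"
  by (rule cdist_eqI) (auto simp: assms algebra_simps sum.distrib)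

lemma msumset_mscale:
  assumes "finite I"
  shows "msumset I c (\<lambda>i. mscale a (F i)) = mscale a (msumset I c F)"
  by (rule cdist_eqI) (auto simp: assms algebra_simps sum_distrib_left)

lemma msumset_empty: "msumset I c (\<lambda>i. Map.empty) = Map.empty"
  by (auto simp: msumset_def)

lemma sum_dom_ext:
  assumes "finite S" "dom D \<subseteq> S"
  shows "(\<Sum>i\<in>S. v0 D i * X i) = (\<Sum>i\<in>dom D. v0 D i * X i)"
  by (rule sum.mono_neutral_right) (auto simp: assms v0_notin)

definition Psi :: "(trm \<Rightarrow> cdist) \<Rightarrow> cdist \<Rightarrow> cdist" where
  "Psi H D = msumset (dom D) (\<lambda>u. the (D u)) H"

lemma Psi_alt: "finite (dom D) \<Longrightarrow> Psi H D = msumset (dom D) (v0 D) H"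
  unfolding Psi_def msumset_def
  by (intro ext) (auto simp: v0_in intro!: sum.cong)

lemma v0_Psi: "finite (dom D) \<Longrightarrow> v0 (Psi H D) u = (\<Sum>i\<in>dom D. v0 D i * v0 (H i) u)"
  by (simp add: Psi_alt)

lemma dom_Psi: "dom (Psi H D) = (\<Union>i\<in>dom D. dom (H i))"
  by (simp add: Psi_def)

lemma Psi_madd:
  assumes "finite (dom D1)" "finite (dom D2)"
  shows "Psi H (madd D1 D2) = madd (Psi H D1) (Psi H D2)"
proof (rule cdist_eqI)
  show "dom (Psi H (madd D1 D2)) = dom (madd (Psi H D1) (Psi H D2))"
    by (simp add: dom_Psi)
next
  fix u
  have f: "finite (dom D1 \<union> dom D2)" using assms by simp
  have "v0 (Psi H (madd D1 D2)) u = (\<Sum>i\<in>dom D1 \<union> dom D2. (v0 D1 i + v0 D2 i) * v0 (H i) u)"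
    using f by (simp add: v0_Psi)
  also have "\<dots> = (\<Sum>i\<in>dom D1 \<union> dom D2. v0 D1 i * v0 (H i) u) + (\<Sum>i\<in>dom D1 \<union> dom D2. v0 D2 i * v0 (H i) u)"
    by (simp add: algebra_simps sum.distrib)
  also have "\<dots> = (\<Sum>i\<in>dom D1. v0 D1 i * v0 (H i) u) + (\<Sum>i\<in>dom D2. v0 D2 i * v0 (H i) u)"
    using f sum_dom_ext[of "dom D1 \<union> dom D2" D1 "\<lambda>i. v0 (H i) u"]
      sum_dom_ext[of "dom D1 \<union> dom D2" D2 "\<lambda>i. v0 (H i) u"] by simp
  finally show "v0 (Psi H (madd D1 D2)) u = v0 (madd (Psi H D1) (Psi H D2)) u"
    using assms by (simp add: v0_Psi)
qed

lemma Psi_mscale: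
  assumes "finite (dom D)"
  shows "Psi H (mscale a D) = mscale a (Psi H D)"
  by (rule cdist_eqI) (auto simp: assms dom_Psi v0_Psi sum_distrib_left algebra_simps)

lemma Psi_single: "Psi H [t \<mapsto> 1] = H t"
  by (rule cdist_eqI) (simp_all add: dom_Psi v0_Psi v0_single)

lemma Psi_empty: "Psi H Map.empty = Map.empty"
  by (simp add: Psi_def msumset_def)

lemma mapd_alt: "finite (dom T) \<Longrightarrow> mapd g T = msumset (dom T) (v0 T) (\<lambda>t. [g t \<mapsto> 1])"
  unfolding mapd_def msumset_def
  by (intro ext) (auto simp: v0_in intro!: sum.cong)

lemma mapd_Psi: "mapd g T = Psi (\<lambda>t. [g t \<mapsto> 1]) T"
  by (simp add: mapd_def Psi_def)

lemma mapd_madd: "finite (dom T1) \<Longrightarrow> finite (dom T2) \<Longrightarrow> mapd g (madd T1 T2) = madd (mapd g T1) (mapd g T2)"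
  by (simp add: mapd_Psi Psi_madd)

lemma mapd_mscale: "finite (dom T) \<Longrightarrow> mapd g (mscale a T) = mscale a (mapd g T)"
  by (simp add: mapd_Psi Psi_mscale)

lemma mapd_empty: "mapd g Map.empty = Map.empty"
  by (simp add: mapd_Psi Psi_empty)

definition G :: "trm \<Rightarrow> cdist \<Rightarrow> cdist" where
  "G u T = (case u of TVal w \<Rightarrow> mapd (subst_t 0 w) T | _ \<Rightarrow> Map.empty)"

lemma G_madd: "finite (dom T1) \<Longrightarrow> finite (dom T2) \<Longrightarrow> G u (madd T1 T2) = madd (G u T1) (G u T2)"
  by (cases u) (auto simp: G_def mapd_madd)

lemma G_mscale: "finite (dom T) \<Longrightarrow> G u (mscale a T) = mscale a (G u T)"
  by (cases u) (auto simp: G_def mapd_mscale)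

lemma G_empty: "G u Map.empty = Map.empty"
  by (cases u) (auto simp: G_def mapd_empty)

lemma bsubst_G: "bsubst T V = msumset (dom V) (\<lambda>u. the (V u)) (\<lambda>u. G u T)"
  by (simp add: bsubst_def G_def)

lemma bsubst_madd: "finite (dom V) \<Longrightarrow> finite (dom T1) \<Longrightarrow> finite (dom T2) \<Longrightarrow>
   bsubst (madd T1 T2) V = madd (bsubst T1 V) (bsubst T2 V)"
  by (simp add: bsubst_G G_madd msumset_madd)

lemma bsubst_mscale: "finite (dom V) \<Longrightarrow> finite (dom T) \<Longrightarrow>
   bsubst (mscale a T) V = mscale a (bsubst T V)"
  by (simp add: bsubst_G G_mscale msumset_mscale)

lemma bsubst_empty: "bsubst Map.empty V = Map.empty"
  by (simp add: bsubst_G G_empty msumset_empty)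

lemma finite_cls: "finite (dom (cls d))"
  by (rule dist.induct[where ?P1.0="\<lambda>_. True" and ?P2.0="\<lambda>_. True" and ?P3.0="\<lambda>d. finite (dom (cls d))"]) auto

definition Hf :: "cdist \<Rightarrow> trm \<Rightarrow> cdist" where
  "Hf V = (\<lambda>u. case u of TVal (VLam d) \<Rightarrow> bsubst (cls d) V | _ \<Rightarrow> Map.empty)"

lemma key:
  assumes "finite (dom V)"
  shows "Psi (Hf V) (cls (fsum (map (\<lambda>(a, d). (a, DTrm (TVal (VLam d)))) xs)))
       = bsubst (cls (fsum xs)) V"
proof (induction xs rule: fsum.induct)
  case 1
  then show ?case by (simp add: Psi_empty bsubst_empty)
next
  case (2 a d)
  then show ?case
    by (simp add: Psi_mscale Psi_single bsubst_mscale assms finite_cls Hf_def)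
next
  case (3 a d y ys)
  then show ?case
    by (simp add: Psi_mscale Psi_madd Psi_single bsubst_mscale bsubst_madd assms finite_cls Hf_def)
qed

lemma dom_lams: "dom (cls (fsum (map (\<lambda>(a, d). (a, DTrm (TVal (VLam d)))) xs))) \<subseteq> {TVal (VLam d) |d. True}"
  by (induction xs rule: fsum.induct) auto

lemma closed_fsum: "\<forall>(a, d) \<in> set xs. closed_v 0 (VLam d) \<Longrightarrow> closed_d (Suc 0) (fsum xs)"
  by (induction xs rule: fsum.induct) auto

theorem proposition4:
  fixes xs :: "(complex \<times> dist) list" and A B :: "cdist set"
  assumes "A \<subseteq> unit_sphere" and "B \<subseteq> unit_sphere"
    and "\<forall>(a, d) \<in> set xs. closed_v 0 (VLam d)"
    and "cls (fsum (map (\<lambda>(a, d). (a, DTrm (TVal (VLam d)))) xs)) \<in> unit_sphere"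
  shows "cls (fsum (map (\<lambda>(a, d). (a, DTrm (TVal (VLam d)))) xs)) \<in> darrow A B
     \<longleftrightarrow> [TVal (VLam (fsum xs)) \<mapsto> 1] \<in> arrow A B"
proof -
  let ?D = "cls (fsum (map (\<lambda>(a, d). (a, DTrm (TVal (VLam d)))) xs))"
  have eq: "\<And>V. V \<in> A \<Longrightarrow> msumset (dom ?D) (\<lambda>u. the (?D u))
          (\<lambda>u. case u of TVal (VLam d) \<Rightarrow> bsubst (cls d) V | _ \<Rightarrow> Map.empty) = bsubst (cls (fsum xs)) V"
  proof -
    fix V assume "V \<in> A"
    then have "finite (dom V)" using assms(1) by (auto simp: unit_sphere_def)
    from key[OF this, of xs] show "?thesis V" by (simp add: Psi_def Hf_def)
  qed
  have l: "?D \<in> darrow A B \<longleftrightarrow> (\<forall>V\<in>A. realizes (bsubst (cls (fsum xs)) V) B)"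
    using assms(4) dom_lams[of xs] eq by (auto simp: darrow_def)
  have c: "closed_v 0 (VLam (fsum xs))" using closed_fsum[OF assms(3)] by simp
  have inj: "[TVal (VLam (fsum xs)) \<mapsto> 1] = [TVal (VLam d) \<mapsto> (1::complex)] \<longleftrightarrow> d = fsum xs" for d
  proof
    assume h: "[TVal (VLam (fsum xs)) \<mapsto> 1] = [TVal (VLam d) \<mapsto> (1::complex)]"
    have "[TVal (VLam d) \<mapsto> (1::complex)] (TVal (VLam (fsum xs))) = Some 1" using h
      by (metis fun_upd_same)
    then show "d = fsum xs" by (auto split: if_splits)
  qed simp
  have r: "[TVal (VLam (fsum xs)) \<mapsto> 1] \<in> arrow A B \<longleftrightarrow> (\<forall>V\<in>A. realizes (bsubst (cls (fsum xs)) V) B)"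
    using c inj by (auto simp: arrow_def)
  show ?thesis using l r by simp
qed

end
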